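(* Let $P(t)(z)=z^n+a_2(t)z^{n-2}-\dots+(-1)^na_n(t)$ (with $a_1=0$) be a curve of complex polynomials whose coefficients $a_i$ are either $C^\infty$ complex valued functions of a real parameter $t$ near $0$, or real analytic in real $t$ near $0$, or holomorphic in a complex parameter $t$ near $0$. Then for every integer $r\ge0$ the following are equivalent: (1) $m(a_k)\ge kr$ for all $2\le k\le n$; (2) $m(\tilde\Delta_k)\ge k(k-1)r$ for all $2\le k\le n$.
   Context: Convention: a monic polynomial is written $P(z)=z^n-a_1z^{n-1}+a_2z^{n-2}-\dots+(-1)^na_n$, so $a_i=\sigma_i(z_1,\dots,z_n)$ is the $i$-th elementary symmetric function of its roots. Multiplicity: for a continuous complex valued function $f$ defined near $0$, $m(f)\in\{0,1,2,\dots\}\cup\{\infty\}$ is the supremum of all integers $p\ge0$ such that $f(t)=t^pg(t)$ near $0$ for some continuous function $g$; for a function $F$ on the space of polynomials and a fixed curve $P$, $m(F)$ means $m(t\mapsto F(P(t)))$. Power sums $s_i(z)=\sum_{j=1}^nz_j^i$ ($s_0=n$); $B_k(z)$ is the $k\times k$ matrix with $(i,j)$-entry $s_{i+j-2}(z)$, and $\Delta_k(z)=\det B_k(z)=\sum_{i_1<\dots<i_k}\prod_{1\le l<m\le k}(z_{i_l}-z_{i_m})^2$. Since $\Delta_k$ is symmetric there is a unique polynomial $\tilde\Delta_k$ with $\Delta_k(z)=\tilde\Delta_k(\sigma_1(z),\dots,\sigma_n(z))$; for a polynomial $P$ with coefficients $a_1,\dots,a_n$ one writes $\tilde\Delta_k(P)=\tilde\Delta_k(a_1,\dots,a_n)$.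 *)

theory Defs
  imports "HOL-Complex_Analysis.Complex_Analysis"
begin

definition esym :: "nat \<Rightarrow> nat \<Rightarrow> (nat \<Rightarrow> complex) \<Rightarrow> complex" where
  "esym n i z = (\<Sum>S \<in> {S. S \<subseteq> {..<n} \<and> card S = i}. \<Prod>j\<in>S. z j)"

definition Delta :: "nat \<Rightarrow> nat \<Rightarrow> (nat \<Rightarrow> complex) \<Rightarrow> complex" where
  "Delta n k z = (\<Sum>I \<in> {I. I \<subseteq> {..<n} \<and> card I = k}.
      \<Prod>p \<in> {(l, m). l \<in> I \<and> m \<in> I \<and> l < m}. (z (fst p) - z (snd p))^2)"

text \<open>tilde Delta_k evaluated at coefficients a_1..a_n: Delta_k of any root vector z
  with sigma_i(z) = a_i (well defined since Delta_k is symmetric; such z exists by FTA).\<close>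
definition tDelta :: "nat \<Rightarrow> nat \<Rightarrow> (nat \<Rightarrow> complex) \<Rightarrow> complex" where
  "tDelta n k a = Delta n k (SOME z. \<forall>i\<in>{1..n}. esym n i z = a i)"

definition mult_ge_real :: "(real \<Rightarrow> complex) \<Rightarrow> nat \<Rightarrow> bool" where
  "mult_ge_real f p \<longleftrightarrow> (\<exists>e>0. \<exists>g. continuous_on (ball 0 e) g \<and>
      (\<forall>t\<in>ball 0 e. f t = complex_of_real t ^ p * g t))"

definition mult_ge_cplx :: "(complex \<Rightarrow> complex) \<Rightarrow> nat \<Rightarrow> bool" where
  "mult_ge_cplx f p \<longleftrightarrow> (\<exists>e>0. \<exists>g. continuous_on (ball 0 e) g \<and>
      (\<forall>t\<in>ball 0 e. f t = t ^ p * g t))"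

definition smooth_on :: "real set \<Rightarrow> (real \<Rightarrow> complex) \<Rightarrow> bool" where
  "smooth_on S f \<longleftrightarrow> (\<exists>D :: nat \<Rightarrow> real \<Rightarrow> complex. D 0 = f \<and>
      (\<forall>k. \<forall>t\<in>S. (D k has_vector_derivative D (Suc k) t) (at t)))"

definition real_analytic_on :: "real set \<Rightarrow> (real \<Rightarrow> complex) \<Rightarrow> bool" where
  "real_analytic_on S f \<longleftrightarrow> (\<forall>x\<in>S. \<exists>r>0. \<exists>c :: nat \<Rightarrow> complex.
      \<forall>t\<in>ball x r. (\<lambda>j. c j * complex_of_real (t - x) ^ j) sums f t)"

end

theory Submission
  imports Defs "HOL-Combinatorics.Permutations" "HOL-Computational_Algebra.Fundamental_Theorem_Algebra"
begin


definition pz :: "nat \<Rightarrow> (nat \<Rightarrow> complex) \<Rightarrow> complex poly" where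
  "pz n z = (\<Prod>j<n. [:- z j, 1:])"

lemma esym_cong: "(\<And>j. j < n \<Longrightarrow> z j = w j) \<Longrightarrow> esym n i z = esym n i w"
  unfolding esym_def by (intro sum.cong refl prod.cong) auto

lemma Delta_cong: "(\<And>j. j < n \<Longrightarrow> z j = w j) \<Longrightarrow> Delta n k z = Delta n k w"
  unfolding Delta_def by (intro sum.cong refl prod.cong) auto

lemma esym_0: "esym n 0 z = 1"
proof -
  have "{S. S \<subseteq> {..<n} \<and> card S = 0} = {{}}"
    by (auto simp: card_eq_0_iff dest: finite_subset[OF _ finite_lessThan])
  then show ?thesis unfolding esym_def by simp
qed

lemma coeff_pz: assumes "m \<le> n" shows "coeff (pz n z) m = (-1)^(n-m) * esym n (n-m) z"
proof -
  have "pz n z = (\<Prod>j\<in>{..<n}. [:- z j:] + [:0,1:])"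
    unfolding pz_def by (intro prod.cong) auto
  also have "\<dots> = (\<Sum>X\<in>Pow {..<n}. (\<Prod>j\<in>X. [:- z j:]) * (\<Prod>j\<in>{..<n}-X. [:0,1:]))"
    by (rule prod_add) simp
  also have "\<dots> = (\<Sum>X\<in>Pow {..<n}. monom (\<Prod>j\<in>X. - z j) (n - card X))"
  proof (intro sum.cong refl)
    fix X assume X: "X \<in> Pow {..<n}"
    then have fX: "finite X" by (auto intro: finite_subset)
    have "(\<Prod>j\<in>X. [:- z j:]) = [:\<Prod>j\<in>X. - z j:]"
      using fX by (induction X rule: finite_induct) auto
    moreover have "card ({..<n} - X) = n - card X"
      using X by (subst card_Diff_subset) (auto intro: finite_subset)
    ultimately show "(\<Prod>j\<in>X. [:- z j:]) * (\<Prod>j\<in>{..<n}-X. [:0,1:]) = monom (\<Prod>j\<in>X. - z j) (n - card X)"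
      by (simp add: monom_altdef)
  qed
  finally have "coeff (pz n z) m = (\<Sum>X\<in>Pow {..<n}. if n - card X = m then (\<Prod>j\<in>X. - z j) else 0)"
    by (simp add: coeff_sum coeff_monom)
  also have "\<dots> = (\<Sum>X\<in>{S. S \<subseteq> {..<n} \<and> card S = n - m}. (\<Prod>j\<in>X. - z j))"
  proof -
    have "\<forall>X\<in>Pow {..<n}. (n - card X = m) = (card X = n - m)"
    proof
      fix X assume "X \<in> Pow {..<n}"
      then have "card X \<le> n" using card_mono[of "{..<n}" X] by auto
      then show "(n - card X = m) = (card X = n - m)" using assms by auto
    qed
    then have "(\<Sum>X\<in>Pow {..<n}. if n - card X = m then (\<Prod>j\<in>X. - z j) else 0)
       = (\<Sum>X\<in>Pow {..<n}. if card X = n - m then (\<Prod>j\<in>X. - z j) else 0)"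
      by (intro sum.cong) auto
    also have "\<dots> = (\<Sum>X\<in>{X\<in>Pow {..<n}. card X = n - m}. (\<Prod>j\<in>X. - z j))"
      by (rule sum.inter_filter[symmetric]) simp
    also have "{X\<in>Pow {..<n}. card X = n - m} = {S. S \<subseteq> {..<n} \<and> card S = n - m}" by auto
    finally show ?thesis .
  qed
  also have "\<dots> = (\<Sum>X\<in>{S. S \<subseteq> {..<n} \<and> card S = n - m}. (-1)^(n-m) * (\<Prod>j\<in>X. z j))"
    by (intro sum.cong refl) (auto simp: prod_uminus)
  also have "\<dots> = (-1)^(n-m) * esym n (n-m) z"
    unfolding esym_def by (simp add: sum_distrib_left)
  finally show ?thesis .
qed

lemma degree_pz: "degree (pz n z) = n"
  unfolding pz_def by (subst degree_prod_eq_sum_degree) auto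

lemma coeff_pz_n: "coeff (pz n z) n = 1"
  using coeff_pz[of n n z] by (simp add: esym_0)

lemma pz_eq:
  assumes "\<forall>i\<in>{1..n}. esym n i z = esym n i w"
  shows "pz n z = pz n w"
proof (rule poly_eqI)
  fix m show "coeff (pz n z) m = coeff (pz n w) m"
  proof (cases "m \<le> n")
    case True
    have "esym n (n-m) z = esym n (n-m) w"
    proof (cases "n - m = 0")
      case True then show ?thesis by (simp add: esym_0)
    next
      case False then show ?thesis using assms by auto
    qed
    then show ?thesis using True by (simp add: coeff_pz)
  next
    case False
    then show ?thesis by (simp add: coeff_eq_0 degree_pz)
  qed
qed

lemma proots_pz: "proots (pz n z) = mset (map z [0..<n])"
proof -
  have "proots (pz n z) = (\<Sum>j<n. proots [:- z j, 1:])"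
    unfolding pz_def by (rule proots_prod) auto
  also have "\<dots> = (\<Sum>j<n. {# z j #})" by simp
  also have "\<dots> = mset (map z [0..<n])"
    by (induction n) auto
  finally show ?thesis .
qed

lemma ex_roots: "\<exists>z. \<forall>i\<in>{1..n}. esym n i z = a i"
proof -
  define cf where "cf i = (if i = 0 then 1 else (-1)^i * a i)" for i
  define p where "p = (\<Sum>i\<le>n. monom (cf i) (n - i))"
  have cp: "coeff p j = (if j \<le> n then cf (n - j) else 0)" for j
  proof -
    have "coeff p j = (\<Sum>i\<le>n. if n - i = j then cf i else 0)"
      unfolding p_def by (simp add: coeff_sum coeff_monom)
    also have "\<dots> = (\<Sum>i\<in>{i. i \<le> n \<and> n - i = j}. cf i)"
      by (simp add: sum.inter_filter[symmetric] atMost_def)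
    also have "\<dots> = (if j \<le> n then cf (n - j) else 0)"
    proof (cases "j \<le> n")
      case True
      have e: "{i. i \<le> n \<and> n - i = j} = {n - j}" using True by auto
      show ?thesis unfolding e using True by simp
    next
      case False
      have e: "{i. i \<le> n \<and> n - i = j} = {}" using False by auto
      show ?thesis unfolding e using False by simp
    qed
    finally show ?thesis .
  qed
  have dp: "degree p = n"
  proof (rule le_antisym)
    show "degree p \<le> n" by (rule degree_le) (simp add: cp)
    show "n \<le> degree p" by (rule le_degree) (simp add: cp cf_def)
  qed
  have lp: "lead_coeff p = 1" using dp cp by (simp add: cf_def)
  obtain root where r: "smult (lead_coeff p) (\<Prod>i<degree p. [:-root i, 1:]) = p"
    using complex_poly_decompose' by blast
  then have "pz n root = p" using lp dp by (simp add: pz_def)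
  have "esym n i root = a i" if i: "i \<in> {1..n}" for i
  proof -
    have "coeff (pz n root) (n - i) = coeff p (n - i)" using \<open>pz n root = p\<close> by simp
    then have "(-1)^i * esym n i root = (-1)^i * a i"
      using i by (auto simp add: coeff_pz cp cf_def)
    then show ?thesis by simp
  qed
  then show ?thesis by blast
qed

definition offd :: "'a set \<Rightarrow> ('a \<times> 'a) set" where
  "offd I = {(l, m). l \<in> I \<and> m \<in> I \<and> l \<noteq> m}"

definition pairs :: "nat set \<Rightarrow> (nat \<times> nat) set" where
  "pairs I = {(l, m). l \<in> I \<and> m \<in> I \<and> l < m}"

lemma offd_eq: "offd I = I \<times> I - (\<lambda>x. (x, x)) ` I"
  unfolding offd_def by auto

lemma card_offd: assumes "finite I" shows "card (offd I) = card I * (card I - 1)"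
proof -
  have "card (offd I) = card (I \<times> I) - card ((\<lambda>x. (x, x)) ` I)"
    unfolding offd_eq using assms by (intro card_Diff_subset; auto)
  also have "card ((\<lambda>x. (x, x)) ` I) = card I"
    by (rule card_image) (auto simp: inj_on_def)
  finally show ?thesis by (simp add: card_cartesian_product algebra_simps)
qed

lemma offd_split: "offd I = pairs I \<union> prod.swap ` pairs I"
  unfolding offd_def pairs_def by (auto simp: image_iff)

lemma pairs_disj: "pairs I \<inter> prod.swap ` pairs I = {}"
  unfolding pairs_def by auto

lemma finite_pairs: "finite I \<Longrightarrow> finite (pairs I)"
  unfolding pairs_def by (rule finite_subset[of _ "I \<times> I"]) auto

lemma card_pairs: assumes "finite I" shows "2 * card (pairs I) = card I * (card I - 1)"
proof -
  have "card (offd I) = card (pairs I) + card (prod.swap ` pairs I)"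
    unfolding offd_split using assms pairs_disj
    by (intro card_Un_disjoint; auto intro: finite_pairs)
  also have "card (prod.swap ` pairs I) = card (pairs I)"
    by (rule card_image) (auto simp: inj_on_def)
  finally show ?thesis using card_offd[OF assms] by simp
qed

lemma prod_pairs:
  fixes z :: "nat \<Rightarrow> complex"
  assumes "finite I"
  shows "(\<Prod>p\<in>pairs I. (z (fst p) - z (snd p))^2) =
     (-1)^(card (pairs I)) * (\<Prod>p\<in>offd I. z (fst p) - z (snd p))"
proof -
  have fp: "finite (pairs I)" using assms by (rule finite_pairs)
  have "(\<Prod>p\<in>offd I. z (fst p) - z (snd p)) =
     (\<Prod>p\<in>pairs I. z (fst p) - z (snd p)) * (\<Prod>p\<in>prod.swap ` pairs I. z (fst p) - z (snd p))"
    unfolding offd_split using fp pairs_disj by (intro prod.union_disjoint) auto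
  also have "(\<Prod>p\<in>prod.swap ` pairs I. z (fst p) - z (snd p)) = (\<Prod>p\<in>pairs I. z (snd p) - z (fst p))"
    by (subst prod.reindex) (auto simp: inj_on_def)
  also have "\<dots> = (\<Prod>p\<in>pairs I. - (z (fst p) - z (snd p)))" by (intro prod.cong) auto
  also have "\<dots> = (-1)^card (pairs I) * (\<Prod>p\<in>pairs I. z (fst p) - z (snd p))"
    by (rule prod_uminus)
  finally have E: "(\<Prod>p\<in>offd I. z (fst p) - z (snd p)) =
     (\<Prod>p\<in>pairs I. z (fst p) - z (snd p)) * ((-1)^card (pairs I) * (\<Prod>p\<in>pairs I. z (fst p) - z (snd p)))" .
  have sq: "(\<Prod>p\<in>pairs I. (z (fst p) - z (snd p))^2) = (\<Prod>p\<in>pairs I. z (fst p) - z (snd p)) * (\<Prod>p\<in>pairs I. z (fst p) - z (snd p))"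
    by (simp only: power2_eq_square prod.distrib)
  have m1: "((-1::complex)^card (pairs I)) * ((-1)^card (pairs I)) = 1"
    by (simp flip: power_add)
  show ?thesis unfolding E sq
    by (metis (no_types, lifting) m1 mult.assoc mult.commute mult.left_neutral)
qed

lemma Delta_alt: "Delta n k z = (-1)^(k*(k-1) div 2) *
   (\<Sum>I\<in>{I. I \<subseteq> {..<n} \<and> card I = k}. \<Prod>p\<in>offd I. z (fst p) - z (snd p))"
proof -
  have "Delta n k z = (\<Sum>I\<in>{I. I \<subseteq> {..<n} \<and> card I = k}. \<Prod>p\<in>pairs I. (z (fst p) - z (snd p))^2)"
    unfolding Delta_def pairs_def by (intro sum.cong refl prod.cong; auto)
  also have "\<dots> = (\<Sum>I\<in>{I. I \<subseteq> {..<n} \<and> card I = k}. (-1)^(k*(k-1) div 2) * (\<Prod>p\<in>offd I. z (fst p) - z (snd p)))"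
  proof (intro sum.cong refl)
    fix I assume I: "I \<in> {I. I \<subseteq> {..<n} \<and> card I = k}"
    then have fI: "finite I" by (auto intro: finite_subset)
    have "card (pairs I) = k*(k-1) div 2" using card_pairs[OF fI] I by auto
    then show "(\<Prod>p\<in>pairs I. (z (fst p) - z (snd p))^2) = (-1)^(k*(k-1) div 2) * (\<Prod>p\<in>offd I. z (fst p) - z (snd p))"
      using prod_pairs[OF fI] by simp
  qed
  finally show ?thesis by (simp add: sum_distrib_left)
qed

lemma offd_image: "inj_on p I \<Longrightarrow> offd (p ` I) = map_prod p p ` offd I"
  unfolding offd_def by (auto simp: inj_on_def image_iff) 

lemma Delta_perm:
  assumes p: "p permutes {..<n}"
  shows "Delta n k (\<lambda>j. w (p j)) = Delta n k w"
proof -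
  let ?S = "{I. I \<subseteq> {..<n} \<and> card I = k}"
  have injp: "inj p" using p by (rule permutes_inj)
  have im: "image p ` ?S = ?S"
  proof
    show "image p ` ?S \<subseteq> ?S"
      using permutes_in_image[OF p] injp by (auto simp: card_image inj_on_subset)
    show "?S \<subseteq> image p ` ?S"
    proof
      fix J assume J: "J \<in> ?S"
      have pi: "inv p permutes {..<n}" using p by (rule permutes_inv)
      have "inv p ` J \<in> ?S"
        using J permutes_in_image[OF pi] permutes_inj[OF pi] by (auto simp: card_image inj_on_subset)
      moreover have "p ` (inv p ` J) = J"
        by (simp add: image_comp permutes_inverses(1)[OF p] o_def)
      ultimately show "J \<in> image p ` ?S" by (metis image_eqI)
    qed
  qed
  have "(\<Sum>I\<in>?S. \<Prod>q\<in>offd I. w (p (fst q)) - w (p (snd q))) =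
        (\<Sum>I\<in>?S. \<Prod>q\<in>offd (p ` I). w (fst q) - w (snd q))"
  proof (intro sum.cong refl)
    fix I assume "I \<in> ?S"
    have ip: "inj_on p I" by (rule inj_on_subset[OF injp]) simp
    have ii: "inj_on (map_prod p p) (offd I)"
      using injp by (auto simp: inj_on_def)
    show "(\<Prod>q\<in>offd I. w (p (fst q)) - w (p (snd q))) = (\<Prod>q\<in>offd (p ` I). w (fst q) - w (snd q))"
      unfolding offd_image[OF ip] prod.reindex[OF ii] by (simp add: case_prod_beta)
  qed
  also have inj: "inj_on (image p) ?S" by (simp add: inj_on_def inj_image_eq_iff[OF injp])
  have "(\<Sum>I\<in>?S. \<Prod>q\<in>offd (p ` I). w (fst q) - w (snd q)) = (\<Sum>I\<in>image p ` ?S. \<Prod>q\<in>offd I. w (fst q) - w (snd q))"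
    by (simp add: sum.reindex[OF inj] o_def)
  also have "\<dots> = (\<Sum>I\<in>?S. \<Prod>q\<in>offd I. w (fst q) - w (snd q))" unfolding im ..
  finally show ?thesis unfolding Delta_alt by simp
qed

lemma Delta_welldef:
  assumes "\<forall>i\<in>{1..n}. esym n i z = esym n i w"
  shows "Delta n k z = Delta n k w"
proof -
  have "proots (pz n z) = proots (pz n w)" using pz_eq[OF assms] by simp
  then have "mset (map z [0..<n]) = mset (map w [0..<n])" by (simp add: proots_pz)
  then obtain p where p: "p permutes {..<length (map w [0..<n])}"
      "permute_list p (map w [0..<n]) = map z [0..<n]"
    by (rule mset_eq_permutation)
  have p': "p permutes {..<n}" using p(1) by simp
  have "z j = w (p j)" if "j < n" for j
  proof -
    have "z j = map z [0..<n] ! j" using that by simp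
    also have "\<dots> = permute_list p (map w [0..<n]) ! j" using p(2) by simp
    also have "\<dots> = map w [0..<n] ! p j" using p(1) that by (simp add: permute_list_nth)
    also have "\<dots> = w (p j)" using permutes_in_image[OF p'] that by simp
    finally show ?thesis .
  qed
  then have "Delta n k z = Delta n k (\<lambda>j. w (p j))" by (rule Delta_cong)
  also have "\<dots> = Delta n k w" using p' by (rule Delta_perm)
  finally show ?thesis .
qed

lemma tDelta_eq:
  assumes "\<forall>i\<in>{1..n}. esym n i z = a i"
  shows "tDelta n k a = Delta n k z"
proof -
  let ?w = "SOME z. \<forall>i\<in>{1..n}. esym n i z = a i"
  have "\<forall>i\<in>{1..n}. esym n i ?w = a i" using ex_roots[of n a] by (rule someI_ex)
  then have "Delta n k ?w = Delta n k z" using assms by (intro Delta_welldef) auto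
  then show ?thesis unfolding tDelta_def by simp
qed

lemma tDelta_cong: "(\<forall>i\<in>{1..n}. a i = b i) \<Longrightarrow> tDelta n k a = tDelta n k b"
  unfolding tDelta_def by (rule arg_cong[where f = "Delta n k"], rule arg_cong[where f = Eps], rule ext) auto

lemma esym_hom: "esym n i (\<lambda>j. c * z j) = c^i * esym n i z"
  unfolding esym_def by (simp add: prod.distrib sum_distrib_left)

lemma Delta_hom: "Delta n k (\<lambda>j. c * z j) = c^(k*(k-1)) * Delta n k z"
proof -
  have "(\<Sum>I\<in>{I. I \<subseteq> {..<n} \<and> card I = k}. \<Prod>p\<in>offd I. c * z (fst p) - c * z (snd p)) =
    (\<Sum>I\<in>{I. I \<subseteq> {..<n} \<and> card I = k}. c^(k*(k-1)) * (\<Prod>p\<in>offd I. z (fst p) - z (snd p)))"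
  proof (intro sum.cong refl)
    fix I assume I: "I \<in> {I. I \<subseteq> {..<n} \<and> card I = k}"
    then have fI: "finite I" by (auto intro: finite_subset)
    have "(\<Prod>p\<in>offd I. c * z (fst p) - c * z (snd p)) = (\<Prod>p\<in>offd I. c * (z (fst p) - z (snd p)))"
      by (simp add: algebra_simps)
    also have "\<dots> = c^(card (offd I)) * (\<Prod>p\<in>offd I. z (fst p) - z (snd p))"
      by (simp add: prod.distrib)
    finally show "(\<Prod>p\<in>offd I. c * z (fst p) - c * z (snd p)) = c^(k*(k-1)) * (\<Prod>p\<in>offd I. z (fst p) - z (snd p))"
      using card_offd[OF fI] I by simp
  qed
  then show ?thesis unfolding Delta_alt by (simp add: sum_distrib_left algebra_simps)
qed

lemma tDelta_hom: "tDelta n k (\<lambda>i. c^i * a i) = c^(k*(k-1)) * tDelta n k a"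
proof -
  obtain z where z: "\<forall>i\<in>{1..n}. esym n i z = a i" using ex_roots by blast
  have "tDelta n k (\<lambda>i. c^i * a i) = Delta n k (\<lambda>j. c * z j)"
    by (rule tDelta_eq) (simp add: esym_hom z)
  also have "\<dots> = c^(k*(k-1)) * tDelta n k a"
    by (simp add: Delta_hom tDelta_eq[OF z])
  finally show ?thesis .
qed


lemma Delta_nonzero:
  fixes z :: "nat \<Rightarrow> complex" and n :: nat
  defines "d \<equiv> card (z ` {..<n})"
  shows "Delta n d z \<noteq> 0"
proof -
  let ?V = "z ` {..<n}"
  let ?S = "{I. I \<subseteq> {..<n} \<and> card I = d}"
  let ?F = "\<lambda>I. \<Prod>p\<in>offd I. z (fst p) - z (snd p)"
  define C where "C = (\<Prod>p\<in>offd ?V. fst p - snd p)"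
  have fS: "finite ?S" by (rule finite_subset[of _ "Pow {..<n}"]) auto
  have foff: "finite (offd I)" if "finite I" for I :: "'b set"
    unfolding offd_eq using that by auto
  have F: "?F I = (if inj_on z I then C else 0)" if I: "I \<in> ?S" for I
  proof (cases "inj_on z I")
    case True
    have "z ` I \<subseteq> ?V" using I by auto
    moreover have "card (z ` I) = card ?V" using I True by (simp add: card_image d_def)
    ultimately have zI: "z ` I = ?V" by (intro card_subset_eq) auto
    have ii: "inj_on (map_prod z z) (offd I)" using True by (auto simp: inj_on_def offd_def)
    have "C = (\<Prod>p\<in>offd (z ` I). fst p - snd p)" unfolding C_def zI ..
    also have "\<dots> = ?F I" unfolding offd_image[OF True] prod.reindex[OF ii] by (simp add: case_prod_beta)
    finally show ?thesis using True by simp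
  next
    case False
    then obtain l m where "l \<in> I" "m \<in> I" "l \<noteq> m" "z l = z m" by (auto simp: inj_on_def)
    then have "(l, m) \<in> offd I" "z (fst (l, m)) - z (snd (l, m)) = 0" by (auto simp: offd_def)
    moreover have "finite I" using I by (auto intro: finite_subset)
    ultimately have "?F I = 0" by (intro prod_zero foff) blast+
    then show ?thesis using False by simp
  qed
  have finV: "finite (offd ?V)" by (rule foff) simp
  have nz: "\<forall>p\<in>offd ?V. fst p - snd p \<noteq> 0"
  proof
    fix p assume "p \<in> offd ?V"
    then have "fst p \<noteq> snd p" unfolding offd_def by (cases p) simp
    then show "fst p - snd p \<noteq> 0" by simp
  qed
  have "C \<noteq> 0" unfolding C_def by (subst prod_zero_iff[OF finV]) (use nz in blast)
  define sig where "sig v = (SOME j. j < n \<and> z j = v)" for v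
  have sig: "sig v < n \<and> z (sig v) = v" if "v \<in> ?V" for v
  proof -
    have "\<exists>j. j < n \<and> z j = v" using that by auto
    then show ?thesis unfolding sig_def by (rule someI_ex)
  qed
  let ?I0 = "sig ` ?V"
  have injs: "inj_on sig ?V"
  proof (rule inj_on_inverseI[where g = z])
    fix v assume "v \<in> ?V" then show "z (sig v) = v" using sig[of v] by simp
  qed
  have I0sub: "?I0 \<subseteq> {..<n}"
  proof
    fix x assume "x \<in> ?I0"
    then obtain v where "v \<in> ?V" "x = sig v" by blast
    then show "x \<in> {..<n}" using sig[of v] by simp
  qed
  have cI0: "card ?I0 = d" unfolding d_def using injs by (simp add: card_image)
  have iI0: "inj_on z ?I0"
  proof (rule inj_onI)
    fix x y assume "x \<in> ?I0" "y \<in> ?I0" "z x = z y"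
    then obtain u v where uv: "u \<in> ?V" "v \<in> ?V" "x = sig u" "y = sig v" by blast
    then have "z x = u" "z y = v" using sig[of u] sig[of v] by simp_all
    then show "x = y" using uv \<open>z x = z y\<close> by simp
  qed
  have I0: "?I0 \<in> {I \<in> ?S. inj_on z I}" using I0sub cI0 iI0 by blast
  have finS': "finite {I \<in> ?S. inj_on z I}" using fS by simp
  have "card {I \<in> ?S. inj_on z I} \<noteq> 0"
    using card_0_eq[OF finS'] I0 by (metis empty_iff)
  have "(\<Sum>I\<in>?S. ?F I) = (\<Sum>I\<in>?S. if inj_on z I then C else 0)"
    by (intro sum.cong refl F)
  also have "\<dots> = of_nat (card {I \<in> ?S. inj_on z I}) * C"
    using fS by (simp add: sum.If_cases Int_def conj_commute)
  finally have "(\<Sum>I\<in>?S. ?F I) \<noteq> 0"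
    using \<open>C \<noteq> 0\<close> \<open>card {I \<in> ?S. inj_on z I} \<noteq> 0\<close> by simp
  then show ?thesis unfolding Delta_alt by simp
qed

lemma esym_1: "esym n 1 z = (\<Sum>j<n. z j)"
proof -
  have "{S. S \<subseteq> {..<n} \<and> card S = 1} = (\<lambda>j. {j}) ` {..<n}"
    by (auto simp: card_Suc_eq)
  then have "esym n 1 z = (\<Sum>S\<in>(\<lambda>j. {j}) ` {..<n}. \<Prod>j\<in>S. z j)" unfolding esym_def by simp
  also have "\<dots> = (\<Sum>j<n. z j)" by (subst sum.reindex) (auto simp: inj_on_def)
  finally show ?thesis .
qed

lemma roots_zero:
  fixes z :: "nat \<Rightarrow> complex"
  assumes s: "esym n 1 z = 0" and D: "\<forall>l\<in>{2..n}. Delta n l z = 0"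
  shows "\<forall>j<n. z j = 0"
proof (cases "n = 0")
  case True then show ?thesis by simp
next
  case False
  let ?V = "z ` {..<n}"
  have "card ?V \<le> n" using card_image_le[of "{..<n}" z] by simp
  moreover have "Delta n (card ?V) z \<noteq> 0" by (rule Delta_nonzero)
  ultimately have "card ?V < 2" using D by (metis atLeastAtMost_iff not_less)
  moreover have "?V \<noteq> {}" using False by auto
  ultimately have "card ?V = 1" by (simp add: card_gt_0_iff less_2_cases_iff)
  then obtain w where V: "?V = {w}" by (auto simp: card_Suc_eq)
  then have zw: "z j = w" if "j < n" for j using that by auto
  have "esym n 1 z = (\<Sum>j<n. z j)" by (rule esym_1)
  also have "\<dots> = of_nat n * w" using zw by simp
  finally have "esym n 1 z = of_nat n * w" .
  then have "w = 0" using s False by simp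
  then show ?thesis using zw by simp
qed

lemma L_tDelta:
  assumes a1: "a 1 = 0" and D: "\<forall>l\<in>{2..n}. tDelta n l a = 0"
  shows "\<forall>i\<in>{1..n}. a i = 0"
proof -
  obtain z where z: "\<forall>i\<in>{1..n}. esym n i z = a i" using ex_roots by blast
  have "esym n 1 z = 0"
  proof (cases "n = 0")
    case True then show ?thesis by (simp only: esym_1) simp
  next
    case False then show ?thesis using z a1 by auto
  qed
  moreover have "\<forall>l\<in>{2..n}. Delta n l z = 0" using D tDelta_eq[OF z] by simp
  ultimately have z0: "\<forall>j<n. z j = 0" by (rule roots_zero)
  have "esym n i z = 0" if "i \<in> {1..n}" for i
    unfolding esym_def
  proof (intro sum.neutral ballI)
    fix S assume "S \<in> {S. S \<subseteq> {..<n} \<and> card S = i}"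
    then have "S \<subseteq> {..<n}" "S \<noteq> {}" "finite S" using that by (auto intro: finite_subset)
    then obtain j where "j \<in> S" "j < n" by auto
    then show "(\<Prod>j\<in>S. z j) = 0" using z0 \<open>finite S\<close> by (intro prod_zero) auto
  qed
  then show ?thesis using z by auto
qed


lemma root_bound:
  assumes z: "\<forall>i\<in>{1..n}. esym n i z = a i" and j: "j < n"
  shows "norm (z j) \<le> 1 + (\<Sum>i\<in>{1..n}. norm (a i))"
proof -
  let ?x = "z j"
  let ?c = "coeff (pz n z)"
  have "poly (pz n z) ?x = 0"
    unfolding pz_def poly_prod using j by (intro prod_zero) auto
  then have "(\<Sum>m\<le>n. ?c m * ?x ^ m) = 0" by (simp add: poly_altdef degree_pz)
  then have "(\<Sum>m<n. ?c m * ?x ^ m) + ?x ^ n = 0"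
    by (simp add: lessThan_Suc_atMost[symmetric] coeff_pz_n)
  then have xn: "?x ^ n = - (\<Sum>m<n. ?c m * ?x ^ m)" by (simp add: eq_neg_iff_add_eq_0 add.commute)
  define A where "A = (\<Sum>m<n. norm (?c m))"
  have "A = (\<Sum>m<n. norm (a (n - m)))"
    unfolding A_def
  proof (intro sum.cong refl)
    fix m assume "m \<in> {..<n}"
    then have "?c m = (-1)^(n-m) * a (n - m)" using z by (simp add: coeff_pz)
    then show "norm (?c m) = norm (a (n - m))" by (simp add: norm_mult norm_power)
  qed
  also have "\<dots> = (\<Sum>i\<in>{1..n}. norm (a i))"
    by (rule sum.reindex_bij_witness[of _ "\<lambda>i. n - i" "\<lambda>m. n - m"]) auto
  finally have A: "A = (\<Sum>i\<in>{1..n}. norm (a i))" .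
  have A0: "0 \<le> A" unfolding A_def by (simp add: sum_nonneg)
  show ?thesis
  proof (cases "norm ?x \<le> 1")
    case True then show ?thesis using A A0 by simp
  next
    case False
    then have x1: "1 < norm ?x" by simp
    have "norm ?x ^ n = norm (\<Sum>m<n. ?c m * ?x ^ m)" using xn by (metis norm_minus_cancel norm_power)
    also have "\<dots> \<le> (\<Sum>m<n. norm (?c m) * norm ?x ^ m)"
      by (rule order_trans[OF norm_sum]) (simp add: norm_mult norm_power)
    also have "\<dots> \<le> (\<Sum>m<n. norm (?c m) * norm ?x ^ (n - 1))"
      using x1 by (intro sum_mono mult_left_mono power_increasing) auto
    also have "\<dots> = A * norm ?x ^ (n - 1)" unfolding A_def by (simp add: sum_distrib_right)
    finally have "norm ?x * norm ?x ^ (n - 1) \<le> A * norm ?x ^ (n - 1)"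
      using j by (metis Suc_pred' gr_implies_not0 neq0_conv power_Suc)
    moreover have "0 < norm ?x ^ (n - 1)" by (rule zero_less_power) (use x1 in linarith)
    ultimately have "norm ?x \<le> A" by (simp add: mult_le_cancel_right)
    then show ?thesis using A by simp
  qed
qed

lemma bw_vec:
  fixes Z :: "nat \<Rightarrow> nat \<Rightarrow> complex"
  assumes "\<And>m j. j < n \<Longrightarrow> norm (Z m j) \<le> B"
  shows "\<exists>r w. strict_mono r \<and> (\<forall>j<n. (\<lambda>m. Z (r m) j) \<longlonglongrightarrow> w j)"
  using assms
proof (induction n)
  case 0
  show ?case by (rule exI[of _ id]) (auto simp: strict_mono_def)
next
  case (Suc n)
  then obtain r w where r: "strict_mono r" "\<forall>j<n. (\<lambda>m. Z (r m) j) \<longlonglongrightarrow> w j" by force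
  have "bounded (range (\<lambda>m. Z (r m) n))"
    using Suc.prems by (auto simp: bounded_iff)
  then obtain l s where s: "strict_mono s" "((\<lambda>m. Z (r m) n) \<circ> s) \<longlonglongrightarrow> l"
    using bounded_imp_convergent_subsequence by blast
  have "strict_mono (r \<circ> s)" using r(1) s(1) by (rule strict_mono_o)
  moreover have "\<forall>j<Suc n. (\<lambda>m. Z ((r \<circ> s) m) j) \<longlonglongrightarrow> (w(n := l)) j"
  proof (intro allI impI)
    fix j assume "j < Suc n"
    show "(\<lambda>m. Z ((r \<circ> s) m) j) \<longlonglongrightarrow> (w(n := l)) j"
    proof (cases "j = n")
      case True then show ?thesis using s(2) by (simp add: o_def)
    next
      case False
      then have "j < n" using \<open>j < Suc n\<close> by simp
      then have "((\<lambda>m. Z (r m) j) \<circ> s) \<longlonglongrightarrow> w j" using r(2) s(1) by (intro LIMSEQ_subseq_LIMSEQ) auto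
      then show ?thesis using False by (simp add: o_def)
    qed
  qed
  ultimately show ?case by blast
qed

lemma esym_tendsto:
  assumes "\<forall>j<n. (\<lambda>m. Z m j) \<longlonglongrightarrow> w j"
  shows "(\<lambda>m. esym n i (Z m)) \<longlonglongrightarrow> esym n i w"
  unfolding esym_def using assms by (intro tendsto_sum tendsto_prod) auto

lemma Delta_tendsto:
  assumes "\<forall>j<n. (\<lambda>m. Z m j) \<longlonglongrightarrow> w j"
  shows "(\<lambda>m. Delta n k (Z m)) \<longlonglongrightarrow> Delta n k w"
  unfolding Delta_def
proof (intro tendsto_sum tendsto_prod tendsto_power tendsto_diff)
  fix I p assume I: "I \<in> {I. I \<subseteq> {..<n} \<and> card I = k}"
    and p: "p \<in> {(l, m). l \<in> I \<and> m \<in> I \<and> l < m}"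
  then have "fst p < n" "snd p < n" by auto
  then show "(\<lambda>m. Z m (fst p)) \<longlonglongrightarrow> w (fst p)" "(\<lambda>m. Z m (snd p)) \<longlonglongrightarrow> w (snd p)"
    using assms by auto
qed

lemma tDelta_tendsto:
  assumes A: "\<forall>i\<in>{1..n}. (\<lambda>m. A m i) \<longlonglongrightarrow> a i"
  shows "(\<lambda>m. tDelta n k (A m)) \<longlonglongrightarrow> tDelta n k a"
proof (rule ccontr)
  assume nc: "\<not> ?thesis"
  define Z where "Z m = (SOME z. \<forall>i\<in>{1..n}. esym n i z = A m i)" for m
  have Z: "\<forall>i\<in>{1..n}. esym n i (Z m) = A m i" for m
    unfolding Z_def using ex_roots[of n "A m"] by (rule someI_ex)
  have tZ: "tDelta n k (A m) = Delta n k (Z m)" for m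
    unfolding tDelta_def Z_def ..
  obtain e where e: "e > 0" "\<forall>N. \<exists>m\<ge>N. e \<le> dist (tDelta n k (A m)) (tDelta n k a)"
    using nc unfolding lim_sequentially by (auto simp: not_less)
  define S where "S = {m. e \<le> dist (tDelta n k (A m)) (tDelta n k a)}"
  have inf: "infinite S" unfolding S_def using e(2)
    by (simp add: infinite_nat_iff_unbounded_le)
  obtain \<rho> :: "nat \<Rightarrow> nat" where \<rho>: "strict_mono \<rho>" "\<forall>m. \<rho> m \<in> S"
    using infinite_enumerate[OF inf] by auto
  have "(\<lambda>m. \<Sum>i\<in>{1..n}. norm (A m i)) \<longlonglongrightarrow> (\<Sum>i\<in>{1..n}. norm (a i))"
    using A by (intro tendsto_sum tendsto_norm) auto
  then have "Bseq (\<lambda>m. \<Sum>i\<in>{1..n}. norm (A m i))" by (intro convergent_imp_Bseq convergentI)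
  then obtain B where B: "\<And>m. norm (\<Sum>i\<in>{1..n}. norm (A m i)) \<le> B" unfolding Bseq_def by blast
  have "norm (Z (\<rho> m) j) \<le> 1 + B" if "j < n" for m j
  proof -
    have "norm (Z (\<rho> m) j) \<le> 1 + (\<Sum>i\<in>{1..n}. norm (A (\<rho> m) i))"
      by (rule root_bound[OF Z that])
    also have "\<dots> \<le> 1 + B" using B[of "\<rho> m"] by simp
    finally show ?thesis .
  qed
  then obtain s w where s: "strict_mono s" "\<forall>j<n. (\<lambda>m. Z (\<rho> (s m)) j) \<longlonglongrightarrow> w j"
    using bw_vec[of n "\<lambda>m. Z (\<rho> m)" "1 + B"] by blast
  have sm: "strict_mono (\<rho> \<circ> s)" using \<rho>(1) s(1) by (rule strict_mono_o)
  have "esym n i w = a i" if i: "i \<in> {1..n}" for i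
  proof -
    have "(\<lambda>m. esym n i (Z (\<rho> (s m)))) \<longlonglongrightarrow> esym n i w" using s(2) by (rule esym_tendsto)
    moreover have "((\<lambda>m. A m i) \<circ> (\<rho> \<circ> s)) \<longlonglongrightarrow> a i" using A i sm by (intro LIMSEQ_subseq_LIMSEQ) auto
    then have "(\<lambda>m. esym n i (Z (\<rho> (s m)))) \<longlonglongrightarrow> a i" using Z i by (simp add: o_def)
    ultimately show ?thesis by (rule LIMSEQ_unique)
  qed
  then have ta: "tDelta n k a = Delta n k w" by (intro tDelta_eq) auto
  have "(\<lambda>m. Delta n k (Z (\<rho> (s m)))) \<longlonglongrightarrow> Delta n k w" using s(2) by (rule Delta_tendsto)
  then have "(\<lambda>m. tDelta n k (A (\<rho> (s m)))) \<longlonglongrightarrow> tDelta n k a" unfolding tZ ta .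
  then obtain N where "\<forall>m\<ge>N. dist (tDelta n k (A (\<rho> (s m)))) (tDelta n k a) < e"
    using e(1) unfolding lim_sequentially by blast
  moreover have "e \<le> dist (tDelta n k (A (\<rho> (s N)))) (tDelta n k a)" using \<rho>(2) unfolding S_def by auto
  ultimately show False by auto
qed

lemma tDelta_continuous_on:
  fixes b :: "nat \<Rightarrow> 'a::metric_space \<Rightarrow> complex"
  assumes "\<forall>i\<in>{1..n}. continuous_on S (b i)"
  shows "continuous_on S (\<lambda>t. tDelta n k (\<lambda>i. b i t))"
proof (rule continuous_on_sequentiallyI)
  fix u a assume u: "\<forall>m. u m \<in> S" "a \<in> S" "u \<longlonglongrightarrow> a"
  show "(\<lambda>m. tDelta n k (\<lambda>i. b i (u m))) \<longlonglongrightarrow> tDelta n k (\<lambda>i. b i a)"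
  proof (rule tDelta_tendsto, intro ballI)
    fix i assume i: "i \<in> {1..n}"
    have c: "continuous_on S (b i)" using assms i by blast
    show "(\<lambda>m. b i (u m)) \<longlonglongrightarrow> b i a"
      by (rule continuous_on_tendsto_compose[OF c u(3) u(2)]) (simp add: u(1))
  qed
qed


lemma eq_at_0:
  fixes F G :: "'a::real_normed_field \<Rightarrow> complex"
  assumes d: "d > 0" and cF: "continuous_on (ball 0 d) F" and cG: "continuous_on (ball 0 d) G"
    and eq: "\<And>s. s \<in> ball 0 d \<Longrightarrow> s \<noteq> 0 \<Longrightarrow> F s = G s"
  shows "F 0 = G 0"
proof -
  have i0: "0 \<in> interior (ball (0::'a) d)" using d by simp
  have "isCont F 0" using continuous_on_interior[OF cF i0] .
  then have tF: "(F \<longlongrightarrow> F 0) (at 0)" by (simp add: isCont_def)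
  have "isCont G 0" using continuous_on_interior[OF cG i0] .
  then have tG: "(G \<longlongrightarrow> G 0) (at 0)" by (simp add: isCont_def)
  have ev: "eventually (\<lambda>s. F s = G s) (at (0::'a))"
    unfolding eventually_at using d eq by (intro exI[of _ d]) (auto simp: dist_norm)
  have "(G \<longlongrightarrow> F 0) (at 0)" using tendsto_cong[OF ev] tF by simp
  then show ?thesis using tG by (intro tendsto_unique[OF at_neq_bot]) 
qed

lemma common_radius:
  fixes P :: "'k \<Rightarrow> real \<Rightarrow> bool"
  assumes "finite K" "\<forall>k\<in>K. \<exists>e>0. P k e"
    and mono: "\<And>k e e'. P k e \<Longrightarrow> 0 < e' \<Longrightarrow> e' \<le> e \<Longrightarrow> P k e'"
  shows "\<exists>e>0. \<forall>k\<in>K. P k e"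
  using assms(1,2)
proof (induction K rule: finite_induct)
  case empty show ?case using zero_less_one by blast
next
  case (insert x F)
  then obtain e1 where e1: "e1 > 0" "\<forall>k\<in>F. P k e1" by auto
  obtain e2 where e2: "e2 > 0" "P x e2" using insert.prems by auto
  have "\<forall>k\<in>insert x F. P k (min e1 e2)"
    using e1 e2 mono by auto
  moreover have "min e1 e2 > 0" using e1 e2 by simp
  ultimately show ?case by blast
qed

locale emb =
  fixes \<phi> :: "'a::real_normed_field \<Rightarrow> complex"
  assumes phi_mult: "\<phi> (x * y) = \<phi> x * \<phi> y" and phi_1: "\<phi> 1 = 1"
    and phi_norm: "norm (\<phi> x) = norm x" and phi_cont: "isCont \<phi> x"
begin

lemma phi_0 [simp]: "\<phi> 0 = 0"
  using phi_norm[of 0] by simp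

lemma phi_eq0 [simp]: "\<phi> x = 0 \<longleftrightarrow> x = 0"
  using phi_norm[of x] by (metis norm_eq_zero)

lemma phi_pow: "\<phi> (x ^ q) = \<phi> x ^ q"
  by (induction q) (simp_all add: phi_1 phi_mult)

lemma continuous_on_phi [continuous_intros]:
  "continuous_on S f \<Longrightarrow> continuous_on S (\<lambda>x. \<phi> (f x))"
  using continuous_on_compose2[of UNIV \<phi> S f] phi_cont
  by (simp add: continuous_at_imp_continuous_on)

definition M :: "('a \<Rightarrow> complex) \<Rightarrow> nat \<Rightarrow> bool" where
  "M f p \<longleftrightarrow> (\<exists>e>0. \<exists>g. continuous_on (ball 0 e) g \<and> (\<forall>t\<in>ball 0 e. f t = \<phi> t ^ p * g t))"

definition T :: "('a \<Rightarrow> complex) \<Rightarrow> bool" where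
  "T f \<longleftrightarrow> (\<forall>N. \<exists>c d G. d > 0 \<and> continuous_on (ball 0 d) G \<and>
      (\<forall>t\<in>ball 0 d. f t = (\<Sum>j<N. c j * \<phi> t ^ j) + \<phi> t ^ N * G t))"

lemma M_0: "T f \<Longrightarrow> M f 0"
  unfolding T_def M_def by (erule allE[of _ 0]) auto

lemma S_step:
  assumes Tf: "T f" and ep: "\<epsilon> > 0" and cg: "continuous_on (ball 0 \<epsilon>) g"
    and fg: "\<forall>t\<in>ball 0 \<epsilon>. f t = \<phi> t ^ p * g t" and g0: "g 0 = 0"
  shows "M f (Suc p)"
proof -
  obtain c d1 G1 where d1: "d1 > 0" and cG1: "continuous_on (ball 0 d1) G1"
    and fe: "\<forall>t\<in>ball 0 d1. f t = (\<Sum>j<Suc p. c j * \<phi> t ^ j) + \<phi> t ^ Suc p * G1 t"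
    using Tf unfolding T_def by blast
  define e' where "e' = min \<epsilon> d1"
  have e': "e' > 0" using ep d1 by (simp add: e'_def)
  have sub1: "ball 0 e' \<subseteq> ball 0 \<epsilon>" "ball 0 e' \<subseteq> ball (0::'a) d1" by (auto simp: e'_def)
  have Peq: "(\<Sum>j<Suc p. c j * \<phi> t ^ j) = \<phi> t ^ p * (g t - \<phi> t * G1 t)" if t: "t \<in> ball 0 e'" for t
  proof -
    have "t \<in> ball 0 \<epsilon>" "t \<in> ball 0 d1" using sub1 t by blast+
    then have "f t = \<phi> t ^ p * g t" "f t = (\<Sum>j<Suc p. c j * \<phi> t ^ j) + \<phi> t ^ Suc p * G1 t"
      using fg fe by blast+
    then show ?thesis by (simp add: algebra_simps)
  qed
  have dummy: True
    by simp
  have call: "\<forall>j<Suc p. c j = 0"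
  proof (rule ccontr)
    assume "\<not> (\<forall>j<Suc p. c j = 0)"
    then have ex: "\<exists>j. j < Suc p \<and> c j \<noteq> 0" by auto
    define j0 where "j0 = (LEAST j. j < Suc p \<and> c j \<noteq> 0)"
    have j0: "j0 < Suc p" "c j0 \<noteq> 0" using LeastI_ex[OF ex] unfolding j0_def by auto
    have below: "c j = 0" if "j < j0" for j
      using not_less_Least[of j "\<lambda>j. j < Suc p \<and> c j \<noteq> 0"] that j0(1) unfolding j0_def by auto
    define Q where "Q t = (\<Sum>j<Suc p - j0. c (j + j0) * \<phi> t ^ j)" for t
    define R where "R t = \<phi> t ^ (p - j0) * (g t - \<phi> t * G1 t)" for t
    have PQ: "(\<Sum>j<Suc p. c j * \<phi> t ^ j) = \<phi> t ^ j0 * Q t" for t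
    proof -
      have U: "{..<Suc p} = {..<j0} \<union> {j0..<Suc p}" using j0(1) by auto
      have "(\<Sum>j<Suc p. c j * \<phi> t ^ j) = (\<Sum>j\<in>{..<j0} \<union> {j0..<Suc p}. c j * \<phi> t ^ j)"
        by (subst U) (rule refl)
      also have "\<dots> = (\<Sum>j<j0. c j * \<phi> t ^ j) + (\<Sum>j\<in>{j0..<Suc p}. c j * \<phi> t ^ j)"
        by (rule sum.union_disjoint) auto
      also have "(\<Sum>j<j0. c j * \<phi> t ^ j) = 0" using below by simp
      also have "(\<Sum>j\<in>{j0..<Suc p}. c j * \<phi> t ^ j) = (\<Sum>j<Suc p - j0. c (j + j0) * \<phi> t ^ (j + j0))"
        by (rule sum.reindex_bij_witness[of _ "\<lambda>j. j + j0" "\<lambda>j. j - j0"]) auto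
      also have "\<dots> = \<phi> t ^ j0 * Q t" unfolding Q_def
        by (simp add: sum_distrib_left power_add algebra_simps)
      finally show ?thesis by simp
    qed
    have PR: "\<phi> t ^ p * (g t - \<phi> t * G1 t) = \<phi> t ^ j0 * R t" for t
      unfolding R_def using j0(1) by (simp add: power_add[symmetric])
    have "Q 0 = R 0"
    proof (rule eq_at_0[OF e'])
      show "continuous_on (ball 0 e') Q" unfolding Q_def by (intro continuous_intros continuous_on_id)
      have "continuous_on (ball 0 e') g" "continuous_on (ball 0 e') G1"
        using continuous_on_subset[OF cg sub1(1)] continuous_on_subset[OF cG1 sub1(2)] .
      then show "continuous_on (ball 0 e') R" unfolding R_def by (intro continuous_intros continuous_on_id)
      fix s :: 'a assume s: "s \<in> ball 0 e'" "s \<noteq> 0"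
      have "\<phi> s ^ j0 * Q s = \<phi> s ^ j0 * R s" using Peq[OF s(1)] PQ PR by simp
      then show "Q s = R s" using s(2) by simp
    qed
    moreover have "Q 0 = c j0"
    proof -
      have "Suc p - j0 = Suc (p - j0)" using j0(1) by simp
      then show ?thesis unfolding Q_def by (simp add: sum.lessThan_Suc_shift)
    qed
    moreover have "R 0 = 0" unfolding R_def using g0 by simp
    ultimately show False using j0(2) by simp
  qed
  have "\<forall>t\<in>ball 0 e'. f t = \<phi> t ^ Suc p * G1 t"
  proof
    fix t :: 'a assume t: "t \<in> ball 0 e'"
    have "(\<Sum>j<Suc p. c j * \<phi> t ^ j) = 0" using call by simp
    moreover have "t \<in> ball 0 d1" using sub1 t by blast
    ultimately show "f t = \<phi> t ^ Suc p * G1 t" using fe by auto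
  qed
  moreover have "continuous_on (ball 0 e') G1" using continuous_on_subset[OF cG1 sub1(2)] .
  ultimately show ?thesis unfolding M_def using e' by blast
qed

end


context emb begin

lemma M_mono_radius:
  assumes "0 < e'" "e' \<le> e" "continuous_on (ball 0 e) g" "\<forall>t\<in>ball 0 e. f t = \<phi> t ^ p * g t"
  shows "continuous_on (ball 0 e') g \<and> (\<forall>t\<in>ball 0 e'. f t = \<phi> t ^ p * g t)"
proof -
  have "ball 0 e' \<subseteq> ball (0::'a) e" using assms(2) by auto
  then show ?thesis using assms(3,4) continuous_on_subset by blast
qed

lemma forward:
  assumes e0: "e0 > 0" and a1: "\<forall>t\<in>ball 0 e0. a 1 t = 0"
    and H: "\<forall>k\<in>{2..n}. M (a k) (k * r)"
  shows "\<forall>l\<in>{2..n}. M (\<lambda>t. tDelta n l (\<lambda>i. a i t)) (l * (l - 1) * r)"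
proof -
  let ?K = "{2..n}"
  let ?P = "\<lambda>k d. d \<le> e0 \<and> (\<exists>g. continuous_on (ball 0 d) g \<and> (\<forall>t\<in>ball 0 d. a k t = \<phi> t ^ (k * r) * g t))"
  have Pmono: "?P k d'" if "?P k d" "0 < d'" "d' \<le> d" for k d d'
    using that M_mono_radius[of d' d _ "a k" "k * r"] by force
  have "\<exists>d>0. \<forall>k\<in>?K. ?P k d"
  proof (rule common_radius)
    show "finite ?K" by simp
    show "\<forall>k\<in>?K. \<exists>d>0. ?P k d"
    proof
      fix k assume "k \<in> ?K"
      then obtain d g where "d > 0" "continuous_on (ball 0 d) g" "\<forall>t\<in>ball 0 d. a k t = \<phi> t ^ (k * r) * g t"
        using H unfolding M_def by blast
      then show "\<exists>d>0. ?P k d" using e0 M_mono_radius[of "min d e0" d g "a k" "k * r"]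
        by (intro exI[of _ "min d e0"]) auto
    qed
    fix k d d' assume "?P k d" "0 < d'" "d' \<le> d"
    then show "?P k d'" using M_mono_radius[of d' d _ "a k" "k * r"] by force
  qed
  then obtain d0 where d0: "d0 > 0" "\<forall>k\<in>?K. ?P k d0" by blast
  define d where "d = min d0 e0"
  have d: "d > 0" "\<forall>k\<in>?K. ?P k d" using d0 e0 Pmono[where d=d0 and d'=d] by (auto simp: d_def)
  have de0: "d \<le> e0" by (simp add: d_def)
  from d have "\<forall>k\<in>?K. \<exists>g. continuous_on (ball 0 d) g \<and> (\<forall>t\<in>ball 0 d. a k t = \<phi> t ^ (k * r) * g t)" by blast
  then obtain G where G: "\<forall>k\<in>?K. continuous_on (ball 0 d) (G k) \<and> (\<forall>t\<in>ball 0 d. a k t = \<phi> t ^ (k * r) * G k t)"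
    by (metis (no_types) bchoice)
  define b where "b i t = (if i \<in> ?K then G i t else 0)" for i t
  have cb: "\<forall>i\<in>{1..n}. continuous_on (ball 0 d) (b i)"
  proof
    fix i show "continuous_on (ball 0 d) (b i)"
      using G unfolding b_def by (cases "i \<in> ?K") (auto intro: continuous_on_const)
  qed
  show ?thesis
  proof
    fix l assume l: "l \<in> ?K"
    have "\<forall>t\<in>ball 0 d. tDelta n l (\<lambda>i. a i t) = \<phi> t ^ (l * (l - 1) * r) * tDelta n l (\<lambda>i. b i t)"
    proof
      fix t :: 'a assume t: "t \<in> ball 0 d"
      have "tDelta n l (\<lambda>i. a i t) = tDelta n l (\<lambda>i. (\<phi> t ^ r) ^ i * b i t)"
      proof (rule tDelta_cong, intro ballI)
        fix i assume i: "i \<in> {1..n}"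
        show "a i t = (\<phi> t ^ r) ^ i * b i t"
        proof (cases "i = 1")
          case True
          have "t \<in> ball 0 e0" using t de0 by auto
          then show ?thesis using True a1 by (simp add: b_def)
        next
          case False
          then have "i \<in> ?K" using i by auto
          then show ?thesis using G t by (simp add: b_def power_mult[symmetric] mult.commute)
        qed
      qed
      also have "\<dots> = (\<phi> t ^ r) ^ (l * (l - 1)) * tDelta n l (\<lambda>i. b i t)" by (rule tDelta_hom)
      also have "\<dots> = \<phi> t ^ (l * (l - 1) * r) * tDelta n l (\<lambda>i. b i t)"
        by (simp add: power_mult[symmetric] mult.commute)
      finally show "tDelta n l (\<lambda>i. a i t) = \<phi> t ^ (l * (l - 1) * r) * tDelta n l (\<lambda>i. b i t)" .
    qed
    moreover have "continuous_on (ball 0 d) (\<lambda>t. tDelta n l (\<lambda>i. b i t))"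
      by (rule tDelta_continuous_on[OF cb])
    ultimately show "M (\<lambda>t. tDelta n l (\<lambda>i. a i t)) (l * (l - 1) * r)"
      unfolding M_def using d(1) by blast
  qed
qed

lemma norm_pow_ball:
  fixes s :: 'a
  assumes "s \<in> ball 0 d" "d \<le> 1" "q > 0"
  shows "s ^ q \<in> ball 0 d"
proof -
  have n1: "norm s \<le> 1" using assms by simp
  have "norm (s ^ q) = norm s ^ q" by (simp add: norm_power)
  also have "\<dots> \<le> norm s ^ 1"
    using assms(3) n1 by (intro power_decreasing) auto
  also have "\<dots> = norm s" by simp
  finally show ?thesis using assms(1) by simp
qed

lemma backward:
  assumes e0: "e0 > 0" and a1: "\<forall>t\<in>ball 0 e0. a 1 t = 0"
    and Ta: "\<forall>k\<in>{2..n}. T (a k)"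
    and H: "\<forall>l\<in>{2..n}. M (\<lambda>t. tDelta n l (\<lambda>i. a i t)) (l * (l - 1) * r)"
  shows "\<forall>k\<in>{2..n}. M (a k) (k * r)"
proof (rule ccontr)
  let ?K = "{2..n}"
  assume "\<not> (\<forall>k\<in>?K. M (a k) (k * r))"
  then obtain k1 where k1: "k1 \<in> ?K" "\<not> M (a k1) (k1 * r)" by blast
  define e where "e k = (GREATEST j. j \<le> k * r \<and> M (a k) j)" for k
  have eM: "M (a k) (e k)" "e k \<le> k * r" if "k \<in> ?K" for k
  proof -
    have "0 \<le> k * r \<and> M (a k) 0" using M_0 Ta that by auto
    then have "e k \<le> k * r \<and> M (a k) (e k)"
      unfolding e_def by (rule GreatestI_nat[where b = "k * r"]) auto
    then show "M (a k) (e k)" "e k \<le> k * r" by auto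
  qed
  have emax: "j \<le> e k" if "k \<in> ?K" "j \<le> k * r" "M (a k) j" for k j
    unfolding e_def by (rule Greatest_le_nat[where b = "k * r"]) (use that in auto)
  have "e k1 \<noteq> k1 * r" using eM[OF k1(1)] k1(2) by metis
  then have ek1: "e k1 < k1 * r" using eM(2)[OF k1(1)] by simp
  define f where "f k = real (e k) / real k" for k
  have fin: "finite (f ` ?K)" "f ` ?K \<noteq> {}" using k1(1) by auto
  obtain k0 where k0: "k0 \<in> ?K" "f k0 = Min (f ` ?K)" using Min_in[OF fin] by auto
  have cross: "e k0 * k \<le> e k * k0" if "k \<in> ?K" for k
  proof -
    have "f k0 \<le> f k" unfolding k0(2) by (rule Min_le) (use fin that in auto)
    moreover have "real k0 > 0" "real k > 0" using k0(1) that by auto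
    ultimately have "real (e k0) * real k \<le> real (e k) * real k0"
      unfolding f_def by (simp add: field_simps)
    then show ?thesis by (simp only: of_nat_mult[symmetric] of_nat_le_iff)
  qed
  define p where "p = e k0"
  define q where "q = k0"
  have q2: "q \<ge> 2" using k0(1) by (simp add: q_def)
  have "k1 * p \<le> e k1 * q" using cross[OF k1(1)] by (simp add: p_def q_def mult.commute)
  also have "\<dots> < k1 * r * q" using ek1 q2 by (intro mult_strict_right_mono) auto
  finally have "k1 * p < k1 * (q * r)" by (simp add: algebra_simps)
  then have pqr: "p < q * r" by (rule mult_less_cancel1[THEN iffD1, THEN conjunct2])
  have qe: "k * p \<le> q * e k" if "k \<in> ?K" for k
    using cross[OF that] by (simp add: p_def q_def mult.commute)
  let ?P = "\<lambda>k d. (\<exists>g. continuous_on (ball 0 d) g \<and> (\<forall>t\<in>ball 0 d. a k t = \<phi> t ^ (e k) * g t)) \<and>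
      (\<exists>h. continuous_on (ball 0 d) h \<and> (\<forall>t\<in>ball 0 d. tDelta n k (\<lambda>i. a i t) = \<phi> t ^ (k * (k - 1) * r) * h t))"
  have Pmono: "?P k d'" if "?P k d" "0 < d'" "d' \<le> d" for k d d'
  proof -
    from that(1) obtain g h where g: "continuous_on (ball 0 d) g" "\<forall>t\<in>ball 0 d. a k t = \<phi> t ^ (e k) * g t"
      and h: "continuous_on (ball 0 d) h" "\<forall>t\<in>ball 0 d. tDelta n k (\<lambda>i. a i t) = \<phi> t ^ (k * (k - 1) * r) * h t"
      by blast
    show ?thesis using M_mono_radius[OF that(2,3) g] M_mono_radius[OF that(2,3) h] by blast
  qed
  have "\<exists>d>0. \<forall>k\<in>?K. ?P k d"
  proof (rule common_radius)
    show "finite ?K" by simp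
    show "\<forall>k\<in>?K. \<exists>d>0. ?P k d"
    proof
      fix k assume k: "k \<in> ?K"
      obtain d1 g where d1: "d1 > 0" "continuous_on (ball 0 d1) g" "\<forall>t\<in>ball 0 d1. a k t = \<phi> t ^ (e k) * g t"
        using eM(1)[OF k] unfolding M_def by blast
      obtain d2 h where d2: "d2 > 0" "continuous_on (ball 0 d2) h"
          "\<forall>t\<in>ball 0 d2. tDelta n k (\<lambda>i. a i t) = \<phi> t ^ (k * (k - 1) * r) * h t"
        using H k unfolding M_def by blast
      have m1: "min d1 d2 > 0" "min d1 d2 \<le> d1" "min d1 d2 \<le> d2" using d1 d2 by auto
      have "?P k (min d1 d2)"
        using M_mono_radius[OF m1(1) m1(2) d1(2,3)] M_mono_radius[OF m1(1) m1(3) d2(2,3)] by blast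
      then show "\<exists>d>0. ?P k d" using d1 d2 by (intro exI[of _ "min d1 d2"]) auto
    qed
    fix k d d' assume "?P k d" "0 < d'" "d' \<le> d"
    then show "?P k d'" by (rule Pmono)
  qed
  then obtain d0 where d0: "d0 > 0" "\<forall>k\<in>?K. ?P k d0" by blast
  define d where "d = min d0 (min e0 1)"
  have d: "d > 0" "d \<le> e0" "d \<le> 1" "\<forall>k\<in>?K. ?P k d"
    using d0 e0 Pmono[where d=d0 and d'=d] by (auto simp: d_def)
  from d(4) have "\<forall>k\<in>?K. \<exists>g. continuous_on (ball 0 d) g \<and> (\<forall>t\<in>ball 0 d. a k t = \<phi> t ^ (e k) * g t)" by blast
  then obtain G where G: "\<forall>k\<in>?K. continuous_on (ball 0 d) (G k) \<and> (\<forall>t\<in>ball 0 d. a k t = \<phi> t ^ (e k) * G k t)"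
    by (metis (no_types) bchoice)
  from d(4) have "\<forall>k\<in>?K. \<exists>h. continuous_on (ball 0 d) h \<and> (\<forall>t\<in>ball 0 d. tDelta n k (\<lambda>i. a i t) = \<phi> t ^ (k * (k - 1) * r) * h t)" by blast
  then obtain Hf where Hf: "\<forall>k\<in>?K. continuous_on (ball 0 d) (Hf k) \<and> (\<forall>t\<in>ball 0 d. tDelta n k (\<lambda>i. a i t) = \<phi> t ^ (k * (k - 1) * r) * Hf k t)"
    by (metis (no_types) bchoice)
  have Gk0: "G k0 0 \<noteq> 0"
  proof
    assume g0: "G k0 0 = 0"
    have Tk0: "T (a k0)" using Ta k0(1) by blast
    have Gc: "continuous_on (ball 0 d) (G k0)" "\<forall>t\<in>ball 0 d. a k0 t = \<phi> t ^ (e k0) * G k0 t"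
      using G k0(1) by blast+
    have "M (a k0) (Suc (e k0))" by (rule S_step[OF Tk0 d(1) Gc g0])
    moreover have "Suc (e k0) \<le> k0 * r" using pqr by (simp add: p_def q_def mult.commute)
    ultimately have "Suc (e k0) \<le> e k0" using emax k0(1) by blast
    then show False by simp
  qed
  have qpos: "q > 0" using q2 by simp
  have pw: "s ^ q \<in> ball 0 d" if "s \<in> ball 0 d" for s :: 'a
    using norm_pow_ball[OF that d(3) qpos] .
  define c where "c i s = (if i \<in> ?K then \<phi> s ^ (q * e i - i * p) * G i (s ^ q) else 0)" for i and s :: 'a
  have cc: "continuous_on (ball 0 d) (c i)" for i
  proof (cases "i \<in> ?K")
    case True
    have "continuous_on (ball 0 d) (\<lambda>s::'a. s ^ q)" by (intro continuous_intros)
    moreover have "(\<lambda>s::'a. s ^ q) ` ball 0 d \<subseteq> ball 0 d" using pw by blast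
    moreover have Gi: "continuous_on (ball 0 d) (G i)" using G True by blast
    ultimately have cG: "continuous_on (ball 0 d) (\<lambda>s. G i (s ^ q))"
      by (intro continuous_on_compose2[OF Gi]) 
    have "c i = (\<lambda>s. \<phi> s ^ (q * e i - i * p) * G i (s ^ q))" using True by (simp add: c_def fun_eq_iff)
    then show ?thesis using cG by (simp only:) (intro continuous_intros continuous_on_id)
  next
    case False
    then have "c i = (\<lambda>s. 0)" unfolding c_def by (intro ext) (simp only: if_False)
    then show ?thesis by simp
  qed
  have ac: "a i (s ^ q) = (\<phi> s ^ p) ^ i * c i s" if s: "s \<in> ball 0 d" and i: "i \<in> {1..n}" for s :: 'a and i
  proof (cases "i = 1")
    case True
    have "s ^ q \<in> ball 0 e0" using pw[OF s] d(2) by auto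
    then show ?thesis using True a1 by (simp add: c_def)
  next
    case False
    then have iK: "i \<in> ?K" using i by auto
    have "a i (s ^ q) = \<phi> (s ^ q) ^ (e i) * G i (s ^ q)" using G iK pw[OF s] by blast
    also have "\<dots> = \<phi> s ^ (q * e i) * G i (s ^ q)" by (simp add: phi_pow power_mult)
    also have "q * e i = i * p + (q * e i - i * p)" using qe[OF iK] by simp
    also have "\<phi> s ^ (i * p + (q * e i - i * p)) * G i (s ^ q) = (\<phi> s ^ p) ^ i * c i s"
      using iK by (simp add: c_def power_add power_mult[symmetric] mult.commute mult.left_commute)
    finally show ?thesis .
  qed
  have D0: "tDelta n l (\<lambda>i. c i 0) = 0" if l: "l \<in> ?K" for l
  proof -
    define E where "E = l * (l - 1) * (q * r - p)"
    have Epos: "E > 0" using l pqr by (simp add: E_def)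
    have "tDelta n l (\<lambda>i. c i 0) = \<phi> 0 ^ E * Hf l (0 ^ q)"
    proof (rule eq_at_0[OF d(1)])
      show "continuous_on (ball 0 d) (\<lambda>s. tDelta n l (\<lambda>i. c i s))"
        using cc by (intro tDelta_continuous_on) auto
      have "continuous_on (ball 0 d) (\<lambda>s::'a. s ^ q)" by (intro continuous_intros)
      moreover have "(\<lambda>s::'a. s ^ q) ` ball 0 d \<subseteq> ball 0 d" using pw by blast
      moreover have Hl: "continuous_on (ball 0 d) (Hf l)" using Hf l by blast
      ultimately have "continuous_on (ball 0 d) (\<lambda>s. Hf l (s ^ q))"
        by (intro continuous_on_compose2[OF Hl])
      then show "continuous_on (ball 0 d) (\<lambda>s. \<phi> s ^ E * Hf l (s ^ q))"
        by (intro continuous_intros continuous_on_id)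
      fix s :: 'a assume s: "s \<in> ball 0 d" "s \<noteq> 0"
      have "tDelta n l (\<lambda>i. a i (s ^ q)) = tDelta n l (\<lambda>i. (\<phi> s ^ p) ^ i * c i s)"
        using ac[OF s(1)] by (intro tDelta_cong) auto
      also have "\<dots> = (\<phi> s ^ p) ^ (l * (l - 1)) * tDelta n l (\<lambda>i. c i s)" by (rule tDelta_hom)
      finally have e1: "tDelta n l (\<lambda>i. a i (s ^ q)) = \<phi> s ^ (p * (l * (l - 1))) * tDelta n l (\<lambda>i. c i s)"
        by (simp add: power_mult)
      have "tDelta n l (\<lambda>i. a i (s ^ q)) = \<phi> (s ^ q) ^ (l * (l - 1) * r) * Hf l (s ^ q)"
        using Hf l pw[OF s(1)] by blast
      also have "\<dots> = \<phi> s ^ (q * (l * (l - 1) * r)) * Hf l (s ^ q)" by (simp add: phi_pow power_mult)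
      also have "q * (l * (l - 1) * r) = p * (l * (l - 1)) + E"
      proof -
        have "q * r = p + (q * r - p)" using pqr by simp
        then have "q * (l * (l - 1) * r) = l * (l - 1) * (p + (q * r - p))" by (simp add: algebra_simps)
        then show ?thesis unfolding E_def by (simp add: algebra_simps)
      qed
      finally have e2: "tDelta n l (\<lambda>i. a i (s ^ q)) = \<phi> s ^ (p * (l * (l - 1))) * (\<phi> s ^ E * Hf l (s ^ q))"
        by (simp add: power_add mult.assoc)
      have nz: "\<phi> s ^ (p * (l * (l - 1))) \<noteq> 0" using s(2) by simp
      have "\<phi> s ^ (p * (l * (l - 1))) * tDelta n l (\<lambda>i. c i s) = \<phi> s ^ (p * (l * (l - 1))) * (\<phi> s ^ E * Hf l (s ^ q))"
        using trans[OF e1[symmetric] e2] .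
      then show "tDelta n l (\<lambda>i. c i s) = \<phi> s ^ E * Hf l (s ^ q)" using nz by (rule mult_left_cancel[THEN iffD1, rotated])
    qed
    then show ?thesis using Epos by simp
  qed
  have "c 1 0 = 0" by (simp add: c_def)
  then have "\<forall>i\<in>{1..n}. c i 0 = 0" using D0 by (intro L_tDelta) auto
  moreover have "k0 \<in> {1..n}" using k0(1) by auto
  moreover have "c k0 0 = G k0 0"
  proof -
    have "k0 \<noteq> 0" using qpos by (simp add: q_def)
    then show ?thesis using k0(1) by (simp add: c_def p_def q_def power_0_left)
  qed
  ultimately show False using Gk0 by simp
qed

end


context emb begin

lemma T_powser:
  assumes r: "r > 0" and S: "\<forall>t\<in>ball 0 r. (\<lambda>j. c j * \<phi> t ^ j) sums f t"
  shows "T f"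
  unfolding T_def
proof
  fix N
  define Gp where "Gp w = (\<Sum>j. c (j + N) * w ^ j)" for w
  define G where "G t = Gp (\<phi> t)" for t
  have key: "summable (\<lambda>j. c (j + N) * \<phi> t ^ j) \<and> isCont Gp (\<phi> t)" if t: "t \<in> ball 0 r" for t
  proof -
    define \<rho> where "\<rho> = (norm t + r) / 2"
    have nt: "norm t < r" "0 \<le> norm t" using t by auto
    have "0 < norm t + r" using nt(2) r by (rule add_nonneg_pos)
    have pos: "0 < norm t + r" using nt(2) r by (rule add_nonneg_pos)
    have \<rho>1: "norm t < \<rho>" using nt r unfolding \<rho>_def by (simp add: field_simps)
    have \<rho>2: "\<rho> < r" using nt r unfolding \<rho>_def by (simp add: field_simps)
    have \<rho>3: "\<rho> > 0" using pos unfolding \<rho>_def by (simp add: field_simps)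
    note \<rho> = \<rho>1 \<rho>2 \<rho>3
    define t0 :: 'a where "t0 = of_real \<rho>"
    have nt0: "norm (\<phi> t0) = \<rho>" using \<rho> by (simp add: phi_norm t0_def)
    have "t0 \<in> ball 0 r" using \<rho> nt0 by (simp add: phi_norm)
    then have "(\<lambda>j. c j * \<phi> t0 ^ j) sums f t0" using S by blast
    then have "summable (\<lambda>j. c j * \<phi> t0 ^ j)" by (rule sums_summable)
    then have "summable (\<lambda>j. c (j + N) * \<phi> t0 ^ (j + N))" by (rule summable_ignore_initial_segment)
    then have "summable (\<lambda>j. c (j + N) * \<phi> t0 ^ (j + N) * inverse (\<phi> t0 ^ N))" by (rule summable_mult2)
    moreover have "\<phi> t0 \<noteq> 0" using nt0 \<rho> by auto
    moreover have "(\<lambda>j. c (j + N) * \<phi> t0 ^ (j + N) * inverse (\<phi> t0 ^ N)) = (\<lambda>j. c (j + N) * \<phi> t0 ^ j)"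
      using \<open>\<phi> t0 \<noteq> 0\<close> by (simp add: fun_eq_iff power_add field_simps)
    ultimately have sK: "summable (\<lambda>j. c (j + N) * \<phi> t0 ^ j)" by simp
    have nlt: "norm (\<phi> t) < norm (\<phi> t0)" using nt0 \<rho> by (simp add: phi_norm)
    have "summable (\<lambda>j. c (j + N) * \<phi> t ^ j)" using powser_inside[OF sK nlt] .
    moreover have "isCont Gp (\<phi> t)" unfolding Gp_def using isCont_powser[OF sK nlt] .
    ultimately show ?thesis by blast
  qed
  have "continuous_on (ball 0 r) G"
  proof (rule continuous_at_imp_continuous_on, intro ballI)
    fix t :: 'a assume t: "t \<in> ball 0 r"
    have "isCont Gp (\<phi> t)" using key[OF t] by blast
    then show "isCont G t" unfolding G_def by (rule isCont_o2[OF phi_cont])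
  qed
  moreover have "\<forall>t\<in>ball 0 r. f t = (\<Sum>j<N. c j * \<phi> t ^ j) + \<phi> t ^ N * G t"
  proof
    fix t :: 'a assume t: "t \<in> ball 0 r"
    have "(\<lambda>j. c (j + N) * \<phi> t ^ j) sums G t" unfolding G_def Gp_def
      using key[OF t] by (simp add: summable_sums)
    then have "(\<lambda>j. \<phi> t ^ N * (c (j + N) * \<phi> t ^ j)) sums (\<phi> t ^ N * G t)" by (rule sums_mult)
    then have "(\<lambda>j. c (j + N) * \<phi> t ^ (j + N)) sums (\<phi> t ^ N * G t)"
      by (simp add: power_add algebra_simps)
    then have "(\<lambda>j. c j * \<phi> t ^ j) sums (\<phi> t ^ N * G t + (\<Sum>j<N. c j * \<phi> t ^ j))"
      by (subst (asm) sums_iff_shift[where f = "\<lambda>j. c j * \<phi> t ^ j"])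
    moreover have "(\<lambda>j. c j * \<phi> t ^ j) sums f t" using S t by blast
    ultimately show "f t = (\<Sum>j<N. c j * \<phi> t ^ j) + \<phi> t ^ N * G t"
      by (simp add: sums_unique2 add.commute)
  qed
  ultimately show "\<exists>c d G. d > 0 \<and> continuous_on (ball 0 d) G \<and>
      (\<forall>t\<in>ball 0 d. f t = (\<Sum>j<N. c j * \<phi> t ^ j) + \<phi> t ^ N * G t)"
    using r by blast
qed

end

lemma taylor_lim:
  fixes u :: "real \<Rightarrow> real" and diff :: "nat \<Rightarrow> real \<Rightarrow> real"
  assumes e: "e > 0" and d0: "diff 0 = u"
    and D: "\<And>m t. \<bar>t\<bar> < e \<Longrightarrow> DERIV (diff m) t :> diff (Suc m) t"
  shows "((\<lambda>t. (u t - (\<Sum>m<N. diff m 0 / fact m * t ^ m)) / t ^ N) \<longlongrightarrow> diff N 0 / fact N) (at 0)"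
proof -
  define \<xi> where "\<xi> t = (SOME x. \<bar>x\<bar> \<le> \<bar>t\<bar> \<and> u t = (\<Sum>m<N. diff m 0 / fact m * t ^ m) + diff N x / fact N * t ^ N)" for t
  have \<xi>: "\<bar>\<xi> t\<bar> \<le> \<bar>t\<bar> \<and> u t = (\<Sum>m<N. diff m 0 / fact m * t ^ m) + diff N (\<xi> t) / fact N * t ^ N"
    if "\<bar>t\<bar> < e" for t
  proof -
    have "\<exists>x. \<bar>x\<bar> \<le> \<bar>t\<bar> \<and> u t = (\<Sum>m<N. diff m 0 / fact m * t ^ m) + diff N x / fact N * t ^ N"
      by (rule Maclaurin_bi_le[where diff = diff and f = u and n = N and x = t, OF d0]) (use D that in auto)
    then show ?thesis unfolding \<xi>_def by (rule someI_ex)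
  qed
  have ev1: "eventually (\<lambda>t. \<bar>t\<bar> < e \<and> t \<noteq> 0) (at (0::real))"
    unfolding eventually_at using e by (intro exI[of _ e]) auto
  have "(\<xi> \<longlongrightarrow> 0) (at 0)"
  proof (rule Lim_null_comparison)
    show "eventually (\<lambda>t. norm (\<xi> t) \<le> \<bar>t\<bar>) (at 0)"
      using ev1 by eventually_elim (use \<xi> in auto)
    show "((\<lambda>t::real. \<bar>t\<bar>) \<longlongrightarrow> 0) (at 0)"
      by (rule tendsto_eq_intros) (auto intro: tendsto_ident_at)
  qed
  moreover have "isCont (diff N) 0" using D[of 0 N] e by (intro DERIV_isCont) auto
  ultimately have "((\<lambda>t. diff N (\<xi> t)) \<longlongrightarrow> diff N 0) (at 0)"
    using isCont_tendsto_compose by fastforce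
  then have lim: "((\<lambda>t. diff N (\<xi> t) / fact N) \<longlongrightarrow> diff N 0 / fact N) (at 0)"
    by (intro tendsto_divide tendsto_const) auto
  have "eventually (\<lambda>t. diff N (\<xi> t) / fact N = (u t - (\<Sum>m<N. diff m 0 / fact m * t ^ m)) / t ^ N) (at 0)"
    using ev1
  proof eventually_elim
    case (elim t)
    then have "u t - (\<Sum>m<N. diff m 0 / fact m * t ^ m) = diff N (\<xi> t) / fact N * t ^ N"
      using \<xi>[of t] by simp
    then show ?case using elim by simp
  qed
  then show ?thesis using tendsto_cong lim by fastforce
qed


interpretation R: emb complex_of_real
proof
  fix x y :: real
  show "complex_of_real (x * y) = complex_of_real x * complex_of_real y" by simp
  show "complex_of_real 1 = 1" by simp
  show "norm (complex_of_real x) = norm x" by simp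
  show "isCont complex_of_real x" by (intro continuous_intros)
qed

interpretation Cx: emb "\<lambda>x::complex. x"
proof
  fix x y :: complex
  show "x * y = x * y" "(1::complex) = 1" "norm x = norm x" by simp_all
  show "isCont (\<lambda>x::complex. x) x" by (rule continuous_ident)
qed

declare Cx.phi_eq0 [simp del] Cx.phi_0 [simp del]

lemma RM_eq: "R.M f p = mult_ge_real f p"
  unfolding R.M_def mult_ge_real_def ..

lemma CM_eq: "Cx.M f p = mult_ge_cplx f p"
  unfolding Cx.M_def mult_ge_cplx_def ..

lemma Re_ofr: "Re (complex_of_real a * z) = a * Re z" by simp
lemma Im_ofr: "Im (complex_of_real a * z) = a * Im z" by simp

lemma smooth_T:
  assumes e: "e > 0" and sm: "smooth_on (ball 0 e) f"
  shows "R.T f"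
proof -
  obtain D where D0: "D 0 = f" and DD: "\<forall>k. \<forall>t\<in>ball 0 e. (D k has_vector_derivative D (Suc k) t) (at t)"
    using sm unfolding smooth_on_def by blast
  show ?thesis unfolding R.T_def
  proof
    fix N
    define c where "c j = D j 0 / complex_of_real (fact j)" for j
    define P where "P t = (\<Sum>j<N. c j * complex_of_real t ^ j)" for t
    define G where "G t = (if t = 0 then D N 0 / complex_of_real (fact N) else (f t - P t) / complex_of_real t ^ N)" for t
    have ident: "\<forall>t\<in>ball 0 e. f t = P t + complex_of_real t ^ N * G t"
    proof
      fix t :: real assume t: "t \<in> ball 0 e"
      show "f t = P t + complex_of_real t ^ N * G t"
      proof (cases "t = 0")
        case True
        have G0: "G 0 = D N 0 / complex_of_real (fact N)" unfolding G_def by simp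
        have f0: "f 0 = D 0 0" unfolding D0 ..
        show ?thesis
        proof (cases N)
          case 0
          have "P 0 = 0" unfolding P_def 0 by simp
          moreover have "G 0 = f 0" unfolding G0 f0 0 by simp
          ultimately show ?thesis unfolding True 0 by simp
        next
          case (Suc N')
          have "P 0 = (\<Sum>j<Suc N'. c j * complex_of_real 0 ^ j)" unfolding P_def Suc ..
          also have "\<dots> = c 0 * complex_of_real 0 ^ 0 + (\<Sum>j<N'. c (Suc j) * complex_of_real 0 ^ Suc j)"
            by (rule sum.lessThan_Suc_shift)
          also have "\<dots> = c 0" by simp
          also have "c 0 = f 0" unfolding c_def f0 by simp
          finally have "P 0 = f 0" .
          moreover have "complex_of_real 0 ^ N = 0" unfolding Suc by simp
          ultimately show ?thesis unfolding True by simp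
        qed
      next
        case False
        then have nz: "complex_of_real t ^ N \<noteq> 0" by simp
        have "G t = (f t - P t) / complex_of_real t ^ N" using False unfolding G_def by simp
        then have "complex_of_real t ^ N * G t = f t - P t" using nz by simp
        then show ?thesis by (simp add: algebra_simps)
      qed
    qed
    have cont: "continuous_on (ball 0 e) G"
    proof (rule continuous_at_imp_continuous_on, intro ballI)
      fix t :: real assume t: "t \<in> ball 0 e"
      show "isCont G t"
      proof (cases "t = 0")
        case False
        have "isCont f t"
          using DD t D0 has_vector_derivative_continuous[of "D 0" "D (Suc 0) t" t UNIV] by auto
        moreover have "isCont P t" unfolding P_def by (intro continuous_intros)
        ultimately have Hc: "isCont (\<lambda>x. (f x - P x) / complex_of_real x ^ N) t"
          using False by (intro continuous_intros) auto
        have ev: "eventually (\<lambda>x. G x = (f x - P x) / complex_of_real x ^ N) (nhds t)"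
          unfolding eventually_nhds_metric
          by (rule exI[of _ "\<bar>t\<bar>"]) (use False in \<open>auto simp: G_def dist_real_def\<close>)
        show ?thesis using isCont_cong[OF ev] Hc by simp
      next
        case True
        have ev: "eventually (\<lambda>x. x \<noteq> 0) (at (0::real))" by (simp add: eventually_at_filter)
        have dRe: "\<And>m x. \<bar>x\<bar> < e \<Longrightarrow> ((\<lambda>x. Re (D m x)) has_real_derivative Re (D (Suc m) x)) (at x)"
          using DD by (intro has_field_derivative_Re) auto
        have dIm: "\<And>m x. \<bar>x\<bar> < e \<Longrightarrow> ((\<lambda>x. Im (D m x)) has_real_derivative Im (D (Suc m) x)) (at x)"
          using DD by (intro has_field_derivative_Im) auto
        have LRe: "((\<lambda>x. (Re (f x) - (\<Sum>m<N. Re (D m 0) / fact m * x ^ m)) / x ^ N) \<longlongrightarrow> Re (D N 0) / fact N) (at 0)"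
          by (rule taylor_lim[where diff = "\<lambda>m x. Re (D m x)", OF e _ dRe]) (simp add: D0)
        have LIm: "((\<lambda>x. (Im (f x) - (\<Sum>m<N. Im (D m 0) / fact m * x ^ m)) / x ^ N) \<longlongrightarrow> Im (D N 0) / fact N) (at 0)"
          by (rule taylor_lim[where diff = "\<lambda>m x. Im (D m x)", OF e _ dIm]) (simp add: D0)
        have cm: "c m * complex_of_real x ^ m = complex_of_real (x ^ m / fact m) * D m 0" for m x
          unfolding c_def by (simp add: field_simps)
        have ReP: "Re (P x) = (\<Sum>m<N. Re (D m 0) / fact m * x ^ m)" for x
          unfolding P_def Re_sum by (rule sum.cong, simp, simp only: cm Re_ofr, simp)
        have ImP: "Im (P x) = (\<Sum>m<N. Im (D m 0) / fact m * x ^ m)" for x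
          unfolding P_def Im_sum by (rule sum.cong, simp, simp only: cm Im_ofr, simp)
        have "((\<lambda>x. Re (G x)) \<longlongrightarrow> Re (G 0)) (at 0)"
        proof -
          have evP: "eventually (\<lambda>x. (Re (f x) - (\<Sum>m<N. Re (D m 0) / fact m * x ^ m)) / x ^ N = Re (G x)) (at 0)"
            using ev by eventually_elim (simp add: G_def ReP flip: of_real_power)
          have "((\<lambda>x. Re (G x)) \<longlongrightarrow> Re (D N 0) / fact N) (at 0)"
            using tendsto_cong[OF evP] LRe by simp
          moreover have "Re (G 0) = Re (D N 0) / fact N" unfolding G_def by (simp only: simp_thms(6) if_True Re_divide_of_real)
          ultimately show ?thesis by simp
        qed
        moreover have "((\<lambda>x. Im (G x)) \<longlongrightarrow> Im (G 0)) (at 0)"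
        proof -
          have evP: "eventually (\<lambda>x. (Im (f x) - (\<Sum>m<N. Im (D m 0) / fact m * x ^ m)) / x ^ N = Im (G x)) (at 0)"
            using ev by eventually_elim (simp add: G_def ImP flip: of_real_power)
          have "((\<lambda>x. Im (G x)) \<longlongrightarrow> Im (D N 0) / fact N) (at 0)"
            using tendsto_cong[OF evP] LIm by simp
          moreover have "Im (G 0) = Im (D N 0) / fact N" unfolding G_def by (simp only: simp_thms(6) if_True Im_divide_of_real)
          ultimately show ?thesis by simp
        qed
        ultimately have "(G \<longlongrightarrow> G 0) (at 0)" by (simp add: tendsto_complex_iff)
        then show ?thesis using True by (simp add: isCont_def)
      qed
    qed
    show "\<exists>c d G. d > 0 \<and> continuous_on (ball 0 d) G \<and>
        (\<forall>t\<in>ball 0 d. f t = (\<Sum>j<N. c j * complex_of_real t ^ j) + complex_of_real t ^ N * G t)"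
      apply (rule exI[of _ c], rule exI[of _ e], rule exI[of _ G])
      using e cont ident unfolding P_def by blast
  qed
qed

theorem lemma6p4:
  shows
  "(\<forall>(n::nat) (a :: nat \<Rightarrow> real \<Rightarrow> complex) (e::real) (r::nat).
      e > 0 \<longrightarrow> (\<forall>t\<in>ball 0 e. a 1 t = 0) \<longrightarrow>
      ((\<forall>k\<in>{2..n}. smooth_on (ball 0 e) (a k)) \<or>
       (\<forall>k\<in>{2..n}. real_analytic_on (ball 0 e) (a k))) \<longrightarrow>
      ((\<forall>k\<in>{2..n}. mult_ge_real (a k) (k * r)) \<longleftrightarrow>
       (\<forall>k\<in>{2..n}. mult_ge_real (\<lambda>t. tDelta n k (\<lambda>i. a i t)) (k * (k - 1) * r))))
   \<and>
   (\<forall>(n::nat) (a :: nat \<Rightarrow> complex \<Rightarrow> complex) (e::real) (r::nat).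
      e > 0 \<longrightarrow> (\<forall>t\<in>ball 0 e. a 1 t = 0) \<longrightarrow>
      (\<forall>k\<in>{2..n}. a k holomorphic_on ball 0 e) \<longrightarrow>
      ((\<forall>k\<in>{2..n}. mult_ge_cplx (a k) (k * r)) \<longleftrightarrow>
       (\<forall>k\<in>{2..n}. mult_ge_cplx (\<lambda>t. tDelta n k (\<lambda>i. a i t)) (k * (k - 1) * r))))"
proof (intro conjI)
  show "\<forall>(n::nat) (a :: nat \<Rightarrow> real \<Rightarrow> complex) (e::real) (r::nat).
      e > 0 \<longrightarrow> (\<forall>t\<in>ball 0 e. a 1 t = 0) \<longrightarrow>
      ((\<forall>k\<in>{2..n}. smooth_on (ball 0 e) (a k)) \<or>
       (\<forall>k\<in>{2..n}. real_analytic_on (ball 0 e) (a k))) \<longrightarrow>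
      ((\<forall>k\<in>{2..n}. mult_ge_real (a k) (k * r)) \<longleftrightarrow>
       (\<forall>k\<in>{2..n}. mult_ge_real (\<lambda>t. tDelta n k (\<lambda>i. a i t)) (k * (k - 1) * r)))"
  proof (intro allI impI)
    fix n :: nat and a :: "nat \<Rightarrow> real \<Rightarrow> complex" and e :: real and r :: nat
    assume e: "e > 0" and a1: "\<forall>t\<in>ball 0 e. a 1 t = 0"
      and reg: "(\<forall>k\<in>{2..n}. smooth_on (ball 0 e) (a k)) \<or> (\<forall>k\<in>{2..n}. real_analytic_on (ball 0 e) (a k))"
    have T: "\<forall>k\<in>{2..n}. R.T (a k)"
    proof
      fix k assume k: "k \<in> {2..n}"
      from reg show "R.T (a k)"
      proof
        assume "\<forall>k\<in>{2..n}. smooth_on (ball 0 e) (a k)"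
        then have "smooth_on (ball 0 e) (a k)" using k by blast
        then show ?thesis by (rule smooth_T[OF e])
      next
        assume "\<forall>k\<in>{2..n}. real_analytic_on (ball 0 e) (a k)"
        then have "real_analytic_on (ball 0 e) (a k)" using k by blast
        moreover have "(0::real) \<in> ball 0 e" using e by simp
        ultimately obtain rr c where rr: "rr > 0"
          "\<forall>t\<in>ball 0 rr. (\<lambda>j. c j * complex_of_real (t - 0) ^ j) sums a k t"
          unfolding real_analytic_on_def by blast
        then have "\<forall>t\<in>ball 0 rr. (\<lambda>j. c j * complex_of_real t ^ j) sums a k t" by simp
        then show ?thesis by (rule R.T_powser[OF rr(1)])
      qed
    qed
    show "(\<forall>k\<in>{2..n}. mult_ge_real (a k) (k * r)) \<longleftrightarrow>
       (\<forall>k\<in>{2..n}. mult_ge_real (\<lambda>t. tDelta n k (\<lambda>i. a i t)) (k * (k - 1) * r))"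
      unfolding RM_eq[symmetric] using R.forward[where a=a and n=n and r=r, OF e a1] R.backward[where a=a and n=n and r=r, OF e a1 T] by blast
  qed
next
  show "\<forall>(n::nat) (a :: nat \<Rightarrow> complex \<Rightarrow> complex) (e::real) (r::nat).
      e > 0 \<longrightarrow> (\<forall>t\<in>ball 0 e. a 1 t = 0) \<longrightarrow>
      (\<forall>k\<in>{2..n}. a k holomorphic_on ball 0 e) \<longrightarrow>
      ((\<forall>k\<in>{2..n}. mult_ge_cplx (a k) (k * r)) \<longleftrightarrow>
       (\<forall>k\<in>{2..n}. mult_ge_cplx (\<lambda>t. tDelta n k (\<lambda>i. a i t)) (k * (k - 1) * r)))"
  proof (intro allI impI)
    fix n :: nat and a :: "nat \<Rightarrow> complex \<Rightarrow> complex" and e :: real and r :: nat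
    assume e: "e > 0" and a1: "\<forall>t\<in>ball 0 e. a 1 t = 0"
      and hol: "\<forall>k\<in>{2..n}. a k holomorphic_on ball 0 e"
    have T: "\<forall>k\<in>{2..n}. Cx.T (a k)"
    proof
      fix k assume k: "k \<in> {2..n}"
      then have h: "a k holomorphic_on ball 0 e" using hol by blast
      have "\<forall>t\<in>ball 0 e. (\<lambda>j. (deriv ^^ j) (a k) 0 / fact j * t ^ j) sums a k t"
      proof
        fix t :: complex assume "t \<in> ball 0 e"
        from holomorphic_power_series[OF h this] show "(\<lambda>j. (deriv ^^ j) (a k) 0 / fact j * t ^ j) sums a k t"
          by simp
      qed
      then show "Cx.T (a k)" by (rule Cx.T_powser[OF e])
    qed
    show "(\<forall>k\<in>{2..n}. mult_ge_cplx (a k) (k * r)) \<longleftrightarrow>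
       (\<forall>k\<in>{2..n}. mult_ge_cplx (\<lambda>t. tDelta n k (\<lambda>i. a i t)) (k * (k - 1) * r))"
      unfolding CM_eq[symmetric] using Cx.forward[where a=a and n=n and r=r, OF e a1] Cx.backward[where a=a and n=n and r=r, OF e a1 T] by blast
  qed
qed


end
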